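(* For every real $M\ge0$ and positive integers $N,K$, with $\mathcal{N}=\{1,\dots,N\}$, \[ \max_{s\in\{1,\dots,\lceil\min\{N,K\}/4\rceil\}}\bar{R}_s(M,\mathcal{N},s)\ge\frac{1}{48}R(M,N,K). \]
   Context: Caching problem: a server holds $N$ files of $F$ bits each, connected through a shared error-free link to users each with a cache of $MF$ bits. In the placement phase each user stores an arbitrary function of the files of at most $MF$ bits; in the delivery phase the demand vector is revealed, the server sends a message over the shared link, and each user must reconstruct its requested file from the message and its cache. The rate is message length divided by $F$. For $s\le N$, $\bar{R}_s(M,\mathcal{N},s)$ is the optimal expected rate (infimum over all placement and delivery schemes of the expected rate, achievable with vanishing error probability for all large $F$) for a system with $s$ users whose demand vector is uniformly distributed over vectors in $\mathcal{N}^s$ with $s$ distinct entries (i.e., files chosen uniformly at random without replacement). The function $R$ is defined by $R(M,N,K)=(1-M/N)\min\{\tfrac{N}{M}(1-(1-M/N)^K),N\}$ for $M\in(0,N]$, $R(0,N,K)=\min\{N,K\}$, and $R(M,N,K)=0$ for $M>N$. *)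

theory Defs
  imports Complex_Main "HOL-Library.FuncSet"
begin

text \<open>Files are indexed by 0..N-1 (a relabelling of 1..N), users by 0..s-1.
  A file library is an extensional map from {..<N} to bit strings of length F.\<close>

definition file_libs :: "nat \<Rightarrow> nat \<Rightarrow> (nat \<Rightarrow> bool list) set" where
  "file_libs N F = ({..<N} \<rightarrow>\<^sub>E {w. length w = F})"

definition distinct_demands :: "nat \<Rightarrow> nat \<Rightarrow> (nat \<Rightarrow> nat) set" where
  "distinct_demands N s = {d \<in> {..<s} \<rightarrow>\<^sub>E {..<N}. inj_on d {..<s}}"

text \<open>A (deterministic) placement/delivery scheme with s users, N files of F bits,
  cache size M*F bits, message lengths L d per demand, error probability (uniform
  random files, worst case over distinct demands) at most eps and expected rate
  (demand uniform over distinct demand vectors) at most R.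
  phi k W : cache content of user k; psi d W : message for demand d;
  mu d k msg cache : decoded file of user k.\<close>
definition good_scheme ::
  "real \<Rightarrow> nat \<Rightarrow> nat \<Rightarrow> nat \<Rightarrow> real \<Rightarrow> real \<Rightarrow> bool" where
  "good_scheme M N s F R eps \<longleftrightarrow>
     (\<exists>(phi :: nat \<Rightarrow> (nat \<Rightarrow> bool list) \<Rightarrow> bool list)
        (psi :: (nat \<Rightarrow> nat) \<Rightarrow> (nat \<Rightarrow> bool list) \<Rightarrow> bool list)
        (mu :: (nat \<Rightarrow> nat) \<Rightarrow> nat \<Rightarrow> bool list \<Rightarrow> bool list \<Rightarrow> bool list)
        (L :: (nat \<Rightarrow> nat) \<Rightarrow> nat).
        (\<forall>k<s. \<forall>W\<in>file_libs N F. real (length (phi k W)) \<le> M * real F) \<and>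
        (\<forall>d\<in>distinct_demands N s. \<forall>W\<in>file_libs N F. length (psi d W) = L d) \<and>
        (\<forall>d\<in>distinct_demands N s.
           real (card {W \<in> file_libs N F. \<exists>k<s. mu d k (psi d W) (phi k W) \<noteq> W (d k)})
             \<le> eps * real (card (file_libs N F))) \<and>
        (\<Sum>d\<in>distinct_demands N s. real (L d))
           \<le> R * real F * real (card (distinct_demands N s)))"

definition achievable_exp_rate :: "real \<Rightarrow> nat \<Rightarrow> nat \<Rightarrow> real \<Rightarrow> bool" where
  "achievable_exp_rate M N s R \<longleftrightarrow>
     (\<forall>eps>0. \<exists>F0. \<forall>F\<ge>F0. good_scheme M N s F R eps)"

definition Rbar :: "real \<Rightarrow> nat \<Rightarrow> nat \<Rightarrow> real" where
  "Rbar M N s = Inf {R. achievable_exp_rate M N s R}"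

definition Rfun :: "real \<Rightarrow> nat \<Rightarrow> nat \<Rightarrow> real" where
  "Rfun M N K =
     (if M = 0 then real (min N K)
      else if M > real N then 0
      else (1 - M / real N) * min (real N / M * (1 - (1 - M / real N) ^ K)) (real N))"

end

theory Submission
  imports Defs "HOL-Combinatorics.Permutations"
begin

lemma bl_eq: "{w::bool list. length w = n} = {xs. set xs \<subseteq> UNIV \<and> length xs = n}" by auto

lemma finite_bl: "finite {w::bool list. length w = n}"
  unfolding bl_eq by (rule finite_lists_length_eq) simp

lemma card_bl: "card {w::bool list. length w = n} = 2^n"
  using card_lists_length_eq[of "UNIV::bool set" n] by simp

lemma bl_le_eq: "{w::bool list. length w \<le> Suc n} = {w. length w \<le> n} \<union> {w. length w = Suc n}"
  by auto

lemma finite_bl_le: "finite {w::bool list. length w \<le> n}"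
proof (induction n)
  case 0 then show ?case by simp
next
  case (Suc n) then show ?case unfolding bl_le_eq using finite_bl by simp
qed

lemma card_bl_le: "card {w::bool list. length w \<le> n} \<le> 2^(n+1)"
proof (induction n)
  case 0 then show ?case by simp
next
  case (Suc n)
  have "card {w::bool list. length w \<le> Suc n} \<le> card {w::bool list. length w \<le> n} + card {w::bool list. length w = Suc n}"
    unfolding bl_le_eq by (rule card_Un_le)
  also have "\<dots> \<le> 2^(n+1) + 2^(Suc n)" using Suc card_bl by simp
  finally show ?case by simp
qed

lemma finite_libs: "finite (file_libs N F)"
  unfolding file_libs_def by (intro finite_PiE finite_bl) simp

lemma card_libs: "card (file_libs N F) = 2^(F*N)"
  unfolding file_libs_def by (simp add: card_PiE card_bl power_mult)

lemma concat_slice: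
  "(\<forall>x\<in>set xs. length x = F) \<Longrightarrow> k < length xs \<Longrightarrow> take F (drop (k*F) (concat xs)) = xs ! k"
proof (induction xs arbitrary: k)
  case Nil then show ?case by simp
next
  case (Cons x xs)
  show ?case
  proof (cases k)
    case 0 then show ?thesis using Cons by simp
  next
    case (Suc k')
    have "drop (k*F) (concat (x#xs)) = drop (k'*F) (concat xs)"
      using Cons.prems Suc by (simp add: add.commute)
    then show ?thesis using Cons Suc by simp
  qed
qed

lemma core:
  fixes phi :: "nat \<Rightarrow> (nat \<Rightarrow> bool list) \<Rightarrow> bool list"
    and psi :: "(nat \<Rightarrow> nat) \<Rightarrow> (nat \<Rightarrow> bool list) \<Rightarrow> bool list"
    and mu :: "(nat \<Rightarrow> nat) \<Rightarrow> nat \<Rightarrow> bool list \<Rightarrow> bool list \<Rightarrow> bool list"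
    and L :: "(nat \<Rightarrow> nat) \<Rightarrow> nat" and \<sigma> :: "nat \<Rightarrow> nat"
  assumes cache: "\<forall>k<s. \<forall>W\<in>file_libs N F. real (length (phi k W)) \<le> M * real F"
  and len: "\<forall>d\<in>distinct_demands N s. \<forall>W\<in>file_libs N F. length (psi d W) = L d"
  and err: "\<forall>d\<in>distinct_demands N s.
           real (card {W \<in> file_libs N F. \<exists>k<s. mu d k (psi d W) (phi k W) \<noteq> W (d k)})
             \<le> eps * real (card (file_libs N F))"
  and eps: "eps * (2 * real b) \<le> 1" and perm: "\<sigma> permutes {..<N}" and bs: "b*s \<le> N" and M0: "M \<ge> 0"
  shows "real (b*s*F) \<le> (\<Sum>j<b. real (L (restrict (\<lambda>k. \<sigma> (j*s+k)) {..<s}))) + real s*(M*real F+1) + 1"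
proof -
  define ds where "ds j = restrict (\<lambda>k. \<sigma> (j*s+k)) {..<s}" for j
  have inj\<sigma>: "inj \<sigma>" using permutes_inj[OF perm] .
  have \<sigma>in: "\<And>x. \<sigma> x < N \<longleftrightarrow> x < N" using permutes_in_image[OF perm] by simp
  have jsk: "j*s+k < b*s" if "j<b" "k<s" for j k
  proof -
    have "j*s+k < j*s + s" using that by simp
    also have "\<dots> = Suc j * s" by simp
    also have "\<dots> \<le> b*s" using that by (intro mult_right_mono) auto
    finally show ?thesis .
  qed
  have ds_in: "ds j \<in> distinct_demands N s" if "j<b" for j
    unfolding distinct_demands_def ds_def
  proof (intro CollectI conjI)
    show "restrict (\<lambda>k. \<sigma> (j*s+k)) {..<s} \<in> {..<s} \<rightarrow>\<^sub>E {..<N}"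
      using jsk[OF that] bs \<sigma>in by (auto simp: PiE_iff) (metis less_le_trans)
    show "inj_on (restrict (\<lambda>k. \<sigma> (j*s+k)) {..<s}) {..<s}"
    proof (rule inj_onI)
      fix x y assume xy: "x \<in> {..<s}" "y \<in> {..<s}"
        and e: "restrict (\<lambda>k. \<sigma> (j*s+k)) {..<s} x = restrict (\<lambda>k. \<sigma> (j*s+k)) {..<s} y"
      then have "\<sigma> (j*s+x) = \<sigma> (j*s+y)" by simp
      then have "j*s+x = j*s+y" by (rule injD[OF inj\<sigma>])
      then show "x = y" by simp
    qed
  qed
  define LIB where "LIB = file_libs N F"
  have finLIB: "finite LIB" unfolding LIB_def by (rule finite_libs)
  define Bad where "Bad j = {W\<in>LIB. \<exists>k<s. mu (ds j) k (psi (ds j) W) (phi k W) \<noteq> W (ds j k)}" for j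
  define G where "G = LIB - (\<Union>j<b. Bad j)"
  have "real (card (\<Union>j<b. Bad j)) \<le> real (\<Sum>j<b. card (Bad j))"
    using card_UN_le[of "{..<b}" Bad] by (simp only: of_nat_le_iff finite_lessThan)
  also have "\<dots> = (\<Sum>j<b. real (card (Bad j)))" by simp
  also have "\<dots> \<le> (\<Sum>j<b. eps * real (card LIB))"
    using err ds_in unfolding Bad_def LIB_def by (intro sum_mono) auto
  also have "\<dots> = real b * eps * real (card LIB)" by simp
  also have "\<dots> = (eps * (2 * real b)) * (real (card LIB) / 2)" by simp
  also have "\<dots> \<le> 1 * (real (card LIB) / 2)" using eps by (intro mult_right_mono) auto
  also have "\<dots> = real (card LIB) / 2" by simp
  finally have cU: "real (card (\<Union>j<b. Bad j)) \<le> real (card LIB) / 2" .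
  have "card G = card LIB - card (\<Union>j<b. Bad j)"
    unfolding G_def by (rule card_Diff_subset) (auto simp: Bad_def intro: finite_subset[OF _ finLIB])
  moreover have "card (\<Union>j<b. Bad j) \<le> card LIB"
    by (rule card_mono[OF finLIB]) (auto simp: Bad_def)
  ultimately have cG: "real (card LIB) / 2 \<le> real (card G)" using cU by (simp add: of_nat_diff)
  define U where "U = \<sigma> ` {..<b*s}"
  define n where "n = nat \<lfloor>M * real F\<rfloor>"
  define \<Phi> where "\<Phi> W = (restrict (\<lambda>j. psi (ds j) W) {..<b}, restrict (\<lambda>k. phi k W) {..<s}, restrict W ({..<N} - U))" for W
  define T1 where "T1 = (\<Pi>\<^sub>E j\<in>{..<b}. {w::bool list. length w = L (ds j)})"
  define T2 where "T2 = (\<Pi>\<^sub>E k\<in>{..<s}. {w::bool list. length w \<le> n})"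
  define T3 where "T3 = (\<Pi>\<^sub>E x\<in>{..<N} - U. {w::bool list. length w = F})"
  have injP: "inj_on \<Phi> G"
  proof (rule inj_onI)
    fix W W' assume W: "W \<in> G" and W': "W' \<in> G" and eq: "\<Phi> W = \<Phi> W'"
    have WL: "W \<in> LIB" "W' \<in> LIB" using W W' unfolding G_def by auto
    show "W = W'"
    proof
      fix x
      show "W x = W' x"
      proof (cases "x < N")
        case False
        then show ?thesis using WL unfolding LIB_def file_libs_def by (metis PiE_arb lessThan_iff)
      next
        case xN: True
        show ?thesis
        proof (cases "x \<in> U")
          case False
          then have "restrict W ({..<N} - U) x = restrict W' ({..<N} - U) x"
            using eq unfolding \<Phi>_def by simp
          then show ?thesis using False xN by simp
        next
          case True
          then obtain i where i: "i < b*s" "x = \<sigma> i" unfolding U_def by auto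
          have s0: "s > 0" using i by (cases s) auto
          define j where "j = i div s"
          define k where "k = i mod s"
          have k: "k < s" unfolding k_def using s0 by simp
          have ij: "i = j*s+k" unfolding j_def k_def by simp
          have j: "j < b" using i(1) unfolding j_def by (simp add: less_mult_imp_div_less)
          have dsjk: "ds j k = x" using k i ij unfolding ds_def by simp
          have p1: "psi (ds j) W = psi (ds j) W'"
            using fun_cong[OF arg_cong[OF eq, of fst], of j] j unfolding \<Phi>_def by simp
          have p2: "phi k W = phi k W'"
            using fun_cong[OF arg_cong[OF eq, of "fst \<circ> snd"], of k] k unfolding \<Phi>_def by simp
          have "W \<notin> Bad j" "W' \<notin> Bad j" using W W' j unfolding G_def by auto
          then have "mu (ds j) k (psi (ds j) W) (phi k W) = W x"
                    "mu (ds j) k (psi (ds j) W') (phi k W') = W' x"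
            using WL k dsjk unfolding Bad_def by auto
          then show ?thesis using p1 p2 by simp
        qed
      qed
    qed
  qed
  have imgP: "\<Phi> ` G \<subseteq> T1 \<times> T2 \<times> T3"
  proof
    fix y assume "y \<in> \<Phi> ` G"
    then obtain W where W: "W \<in> G" and y: "y = \<Phi> W" by auto
    have WL: "W \<in> LIB" using W unfolding G_def by auto
    have "restrict (\<lambda>j. psi (ds j) W) {..<b} \<in> T1"
      unfolding T1_def using len ds_in WL unfolding LIB_def by auto
    moreover have "restrict (\<lambda>k. phi k W) {..<s} \<in> T2"
      unfolding T2_def n_def using cache WL unfolding LIB_def by (auto intro: le_nat_floor)
    moreover have "restrict W ({..<N} - U) \<in> T3"
      unfolding T3_def using WL unfolding LIB_def file_libs_def by (auto simp: PiE_iff)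
    ultimately show "y \<in> T1 \<times> T2 \<times> T3" unfolding y \<Phi>_def by simp
  qed
  have finT: "finite T1" "finite T2" "finite T3"
    unfolding T1_def T2_def T3_def by (auto intro!: finite_PiE finite_bl finite_bl_le)
  have cardU: "card U = b*s" unfolding U_def using inj\<sigma>
    by (simp add: card_image inj_on_subset)
  have Usub: "U \<subseteq> {..<N}" unfolding U_def
  proof (rule image_subsetI)
    fix i assume "i \<in> {..<b*s}"
    then have "i < N" using bs by simp
    then show "\<sigma> i \<in> {..<N}" using \<sigma>in by simp
  qed
  have cT1: "card T1 = 2 ^ (\<Sum>j<b. L (ds j))"
    unfolding T1_def by (simp add: card_PiE card_bl power_sum)
  have cT2: "card T2 \<le> 2 ^ ((n+1)*s)"
  proof -
    have "card T2 = card {w::bool list. length w \<le> n} ^ s" unfolding T2_def by (simp add: card_PiE)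
    also have "\<dots> \<le> (2^(n+1))^s" by (rule power_mono[OF card_bl_le]) simp
    also have "\<dots> = 2 ^ ((n+1)*s)" by (simp only: power_mult)
    finally show ?thesis .
  qed
  have cT3: "card T3 = 2 ^ (F * (N - b*s))"
  proof -
    have "card ({..<N} - U) = N - b*s" using Usub cardU by (simp add: card_Diff_subset finite_subset)
    then show ?thesis unfolding T3_def by (simp add: card_PiE card_bl power_mult)
  qed
  have "card G = card (\<Phi> ` G)" using injP by (simp add: card_image)
  also have "\<dots> \<le> card (T1 \<times> T2 \<times> T3)"
    using imgP finT by (intro card_mono) auto
  also have "\<dots> = card T1 * card T2 * card T3" by (simp add: card_cartesian_product)
  also have "\<dots> \<le> 2 ^ (\<Sum>j<b. L (ds j)) * 2 ^ ((n+1)*s) * 2 ^ (F * (N - b*s))"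
    using cT1 cT2 cT3 by simp
  also have "\<dots> = 2 ^ ((\<Sum>j<b. L (ds j)) + (n+1)*s + F * (N - b*s))"
    by (simp add: power_add)
  finally have c1: "card G \<le> 2 ^ ((\<Sum>j<b. L (ds j)) + (n+1)*s + F * (N - b*s))" .
  have "(2::nat) ^ (F*N) \<le> 2 * card G"
    using cG unfolding LIB_def card_libs by linarith
  also have "\<dots> \<le> 2 ^ ((\<Sum>j<b. L (ds j)) + (n+1)*s + F * (N - b*s) + 1)" using c1 by simp
  finally have "F*N \<le> (\<Sum>j<b. L (ds j)) + (n+1)*s + F * (N - b*s) + 1"
    by (rule power_le_imp_le_exp[rotated]) simp
  moreover have "F*N = F*(N - b*s) + b*s*F" using bs by (simp add: algebra_simps)
  ultimately have nat1: "b*s*F \<le> (\<Sum>j<b. L (ds j)) + (n+1)*s + 1" by linarith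
  have nM: "real n \<le> M * real F" unfolding n_def using M0 by simp
  have "real (b*s*F) \<le> real ((\<Sum>j<b. L (ds j)) + (n+1)*s + 1)" using nat1 by linarith
  also have "\<dots> = (\<Sum>j<b. real (L (ds j))) + (real n + 1) * real s + 1" by (simp add: algebra_simps)
  also have "\<dots> \<le> (\<Sum>j<b. real (L (ds j))) + (M * real F + 1) * real s + 1"
    using nM by (simp add: mult_right_mono)
  finally show ?thesis unfolding ds_def by (simp add: algebra_simps)
qed

lemma card_dem: "d \<in> distinct_demands N s \<Longrightarrow> s \<le> N"
proof -
  assume d: "d \<in> distinct_demands N s"
  then have "card (d ` {..<s}) = s" unfolding distinct_demands_def by (simp add: card_image)
  moreover have "d ` {..<s} \<subseteq> {..<N}" using d unfolding distinct_demands_def by auto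
  ultimately show "s \<le> N" by (metis card_lessThan card_mono finite_lessThan)
qed

lemma extend_perm:
  assumes d: "d \<in> distinct_demands N s"
  shows "\<exists>\<tau>. \<tau> permutes {..<N} \<and> (\<forall>k<s. \<tau> k = d k)"
proof -
  have sN: "s \<le> N" using card_dem[OF d] .
  define A where "A = d ` {..<s}"
  have dinj: "inj_on d {..<s}" and dP: "d \<in> {..<s} \<rightarrow>\<^sub>E {..<N}" using d unfolding distinct_demands_def by auto
  have cA: "card A = s" unfolding A_def using dinj by (simp add: card_image)
  have AN: "A \<subseteq> {..<N}" unfolding A_def using dP by auto
  have "card ({..<N} - A) = N - s" using cA AN by (simp add: card_Diff_subset finite_subset)
  then obtain g where g: "bij_betw g {s..<N} ({..<N} - A)"
    using finite_same_card_bij[of "{s..<N}" "{..<N} - A"] by auto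
  define \<tau> where "\<tau> x = (if x < s then d x else if x < N then g x else x)" for x
  have img: "\<tau> ` {..<N} \<subseteq> {..<N}"
  proof
    fix y assume "y \<in> \<tau> ` {..<N}"
    then obtain x where x: "x < N" "y = \<tau> x" by auto
    show "y \<in> {..<N}"
    proof (cases "x < s")
      case True then show ?thesis using x AN unfolding \<tau>_def A_def by auto
    next
      case False
      then have "g x \<in> {..<N} - A" using g x unfolding bij_betw_def by auto
      then show ?thesis using x False unfolding \<tau>_def by auto
    qed
  qed
  have inj: "inj_on \<tau> {..<N}"
  proof (rule inj_onI)
    fix x y assume x: "x \<in> {..<N}" and y: "y \<in> {..<N}" and e: "\<tau> x = \<tau> y"
    have gx: "x \<ge> s \<Longrightarrow> g x \<in> {..<N} - A" using g x unfolding bij_betw_def by auto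
    have gy: "y \<ge> s \<Longrightarrow> g y \<in> {..<N} - A" using g y unfolding bij_betw_def by auto
    show "x = y"
    proof (cases "x < s")
      case True
      show ?thesis
      proof (cases "y < s")
        case True
        then show ?thesis using \<open>x < s\<close> e dinj unfolding \<tau>_def inj_on_def by auto
      next
        case False
        then show ?thesis using \<open>x < s\<close> e gy y unfolding \<tau>_def A_def by (auto simp: image_iff) (metis lessThan_iff)
      qed
    next
      case False
      show ?thesis
      proof (cases "y < s")
        case True
        then show ?thesis using False e gx x unfolding \<tau>_def A_def by (auto simp: image_iff)
      next
        case False
        then have "g x = g y" using \<open>\<not> x < s\<close> e x y unfolding \<tau>_def by auto
        then show ?thesis using g \<open>\<not> x < s\<close> False x y unfolding bij_betw_def inj_on_def by auto
      qed
    qed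
  qed
  have "bij_betw \<tau> {..<N} {..<N}"
    unfolding bij_betw_def using inj img endo_inj_surj[of "{..<N}" \<tau>] by auto
  then have "\<tau> permutes {..<N}" by (rule bij_imp_permutes) (use sN in \<open>simp add: \<tau>_def\<close>)
  moreover have "\<forall>k<s. \<tau> k = d k" unfolding \<tau>_def by simp
  ultimately show ?thesis by blast
qed

definition rs :: "nat \<Rightarrow> (nat \<Rightarrow> nat) \<Rightarrow> (nat \<Rightarrow> nat) \<Rightarrow> (nat \<Rightarrow> nat)" where
  "rs s \<sigma> d = restrict (\<sigma> \<circ> d) {..<s}"

lemma rs_in:
  assumes p: "\<sigma> permutes {..<N}" and d: "d \<in> distinct_demands N s"
  shows "rs s \<sigma> d \<in> distinct_demands N s"
proof -
  have inj\<sigma>: "inj \<sigma>" using permutes_inj[OF p] .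
  have \<sigma>in: "\<And>x. \<sigma> x < N \<longleftrightarrow> x < N" using permutes_in_image[OF p] by simp
  have dP: "d \<in> {..<s} \<rightarrow>\<^sub>E {..<N}" and dinj: "inj_on d {..<s}"
    using d unfolding distinct_demands_def by auto
  have "rs s \<sigma> d \<in> {..<s} \<rightarrow>\<^sub>E {..<N}"
    unfolding rs_def using dP \<sigma>in by (auto simp: PiE_iff)
  moreover have "inj_on (rs s \<sigma> d) {..<s}"
  proof (rule inj_onI)
    fix x y assume xy: "x \<in> {..<s}" "y \<in> {..<s}" and e: "rs s \<sigma> d x = rs s \<sigma> d y"
    then have "\<sigma> (d x) = \<sigma> (d y)" unfolding rs_def by simp
    then have "d x = d y" by (rule injD[OF inj\<sigma>])
    then show "x = y" using dinj xy by (meson inj_onD)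
  qed
  ultimately show ?thesis unfolding distinct_demands_def by simp
qed

lemma rs_inv:
  assumes p: "\<sigma> permutes {..<N}" and d: "d \<in> distinct_demands N s"
  shows "rs s (inv \<sigma>) (rs s \<sigma> d) = d"
proof
  fix k
  have dP: "d \<in> {..<s} \<rightarrow>\<^sub>E {..<N}" using d unfolding distinct_demands_def by auto
  show "rs s (inv \<sigma>) (rs s \<sigma> d) k = d k"
    using permutes_inverses[OF p] PiE_arb[OF dP, of k] unfolding rs_def by auto
qed

lemma sum_rs:
  assumes p: "\<sigma> permutes {..<N}"
  shows "(\<Sum>d\<in>distinct_demands N s. g (rs s \<sigma> d)) = (\<Sum>d\<in>distinct_demands N s. g d)"
proof (rule sum.reindex_bij_witness[of _ "rs s (inv \<sigma>)" "rs s \<sigma>"])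
  have pi: "inv \<sigma> permutes {..<N}" using permutes_inv[OF p] .
  show "\<And>a. a \<in> distinct_demands N s \<Longrightarrow> rs s (inv \<sigma>) (rs s \<sigma> a) = a" using rs_inv[OF p] .
  show "\<And>a. a \<in> distinct_demands N s \<Longrightarrow> rs s \<sigma> a \<in> distinct_demands N s" using rs_in[OF p] .
  show "\<And>b. b \<in> distinct_demands N s \<Longrightarrow> rs s \<sigma> (rs s (inv \<sigma>) b) = b"
    using rs_inv[OF pi] by (simp add: inv_inv_eq permutes_bij[OF p])
  show "\<And>b. b \<in> distinct_demands N s \<Longrightarrow> rs s (inv \<sigma>) b \<in> distinct_demands N s" using rs_in[OF pi] .
qed simp

definition d0 :: "nat \<Rightarrow> nat \<Rightarrow> nat \<Rightarrow> nat" where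
  "d0 s j = restrict (\<lambda>k. j*s+k) {..<s}"

lemma d0_in:
  assumes "j < b" "b*s \<le> N"
  shows "d0 s j \<in> distinct_demands N s"
proof -
  have "j*s+k < N" if "k<s" for k
  proof -
    have "j*s+k < Suc j * s" using that by simp
    also have "\<dots> \<le> b*s" using assms by (intro mult_right_mono) auto
    finally show ?thesis using assms by simp
  qed
  then show ?thesis unfolding distinct_demands_def d0_def by (auto simp: PiE_iff inj_on_def)
qed

lemma avg:
  fixes phi :: "nat \<Rightarrow> (nat \<Rightarrow> bool list) \<Rightarrow> bool list"
    and psi :: "(nat \<Rightarrow> nat) \<Rightarrow> (nat \<Rightarrow> bool list) \<Rightarrow> bool list"
    and mu :: "(nat \<Rightarrow> nat) \<Rightarrow> nat \<Rightarrow> bool list \<Rightarrow> bool list \<Rightarrow> bool list"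
    and L :: "(nat \<Rightarrow> nat) \<Rightarrow> nat"
  assumes cache: "\<forall>k<s. \<forall>W\<in>file_libs N F. real (length (phi k W)) \<le> M * real F"
  and len: "\<forall>d\<in>distinct_demands N s. \<forall>W\<in>file_libs N F. length (psi d W) = L d"
  and err: "\<forall>d\<in>distinct_demands N s.
           real (card {W \<in> file_libs N F. \<exists>k<s. mu d k (psi d W) (phi k W) \<noteq> W (d k)})
             \<le> eps * real (card (file_libs N F))"
  and eps: "eps * (2 * real b) \<le> 1" and bs: "b*s \<le> N" and M0: "M \<ge> 0" and b1: "b \<ge> 1"
  shows "real (card (distinct_demands N s)) * (real (b*s*F) - real s*(M*real F+1) - 1)
          \<le> real b * (\<Sum>d\<in>distinct_demands N s. real (L d))"
proof -
  define D where "D = distinct_demands N s"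
  define P where "P = {\<sigma>. \<sigma> permutes {..<N}}"
  define B where "B = real (b*s*F) - real s*(M*real F+1) - 1"
  have finP: "finite P" unfolding P_def by (rule finite_permutations) simp
  have cP: "card P > 0" using finP permutes_id[of "{..<N}"] unfolding P_def
    by (metis card_gt_0_iff empty_iff mem_Collect_eq)
  define f where "f d = (\<Sum>\<sigma>\<in>P. real (L (rs s \<sigma> d)))" for d
  have fconst: "f d = f (d0 s 0)" if d: "d \<in> D" for d
  proof -
    obtain \<tau> where \<tau>: "\<tau> permutes {..<N}" "\<forall>k<s. \<tau> k = d k"
      using extend_perm d unfolding D_def by blast
    have "f (d0 s 0) = (\<Sum>\<sigma>\<in>P. real (L (rs s (\<sigma> \<circ> \<tau>) (d0 s 0))))"
      unfolding f_def P_def by (rule sum_permutations_compose_right[OF \<tau>(1)])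
    also have "\<dots> = f d"
      unfolding f_def
    proof (rule sum.cong[OF refl])
      fix \<sigma> show "real (L (rs s (\<sigma> \<circ> \<tau>) (d0 s 0))) = real (L (rs s \<sigma> d))"
      proof -
        have "rs s (\<sigma> \<circ> \<tau>) (d0 s 0) = rs s \<sigma> d"
          unfolding rs_def d0_def using \<tau>(2) by (auto simp: restrict_def)
        then show ?thesis by simp
      qed
    qed
    finally show ?thesis by simp
  qed
  have "real (card P) * (\<Sum>d\<in>D. real (L d)) = (\<Sum>\<sigma>\<in>P. \<Sum>d\<in>D. real (L d))" by simp
  also have "\<dots> = (\<Sum>\<sigma>\<in>P. \<Sum>d\<in>D. real (L (rs s \<sigma> d)))"
    unfolding D_def P_def
    by (rule sum.cong[OF refl], rule sum_rs[symmetric, where g="\<lambda>d. real (L d)"]) simp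
  also have "\<dots> = (\<Sum>d\<in>D. f d)" unfolding f_def by (rule sum.swap)
  also have "\<dots> = real (card D) * f (d0 s 0)" using fconst by simp
  finally have e1: "real (card P) * (\<Sum>d\<in>D. real (L d)) = real (card D) * f (d0 s 0)" .
  have "(\<Sum>j<b. f (d0 s j)) = (\<Sum>j<b. f (d0 s 0))"
    by (rule sum.cong[OF refl], rule fconst) (simp add: D_def d0_in[OF _ bs])
  then have "real b * f (d0 s 0) = (\<Sum>j<b. f (d0 s j))" by simp
  also have "\<dots> = (\<Sum>\<sigma>\<in>P. \<Sum>j<b. real (L (rs s \<sigma> (d0 s j))))" unfolding f_def by (rule sum.swap)
  also have "\<dots> \<ge> (\<Sum>\<sigma>\<in>P. B)"
  proof (rule sum_mono)
    fix \<sigma> assume "\<sigma> \<in> P"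
    then have p: "\<sigma> permutes {..<N}" unfolding P_def by simp
    have "rs s \<sigma> (d0 s j) = restrict (\<lambda>k. \<sigma> (j*s+k)) {..<s}" for j
      unfolding rs_def d0_def by (auto simp: restrict_def)
    then show "B \<le> (\<Sum>j<b. real (L (rs s \<sigma> (d0 s j))))"
      using core[OF cache len err eps p bs M0] unfolding B_def by simp
  qed
  finally have e2: "real (card P) * B \<le> real b * f (d0 s 0)" by simp
  have "real (card P) * (real (card D) * B) = real (card D) * (real (card P) * B)" by simp
  also have "\<dots> \<le> real (card D) * (real b * f (d0 s 0))" using e2 by (intro mult_left_mono) auto
  also have "\<dots> = real (card P) * (real b * (\<Sum>d\<in>D. real (L d)))" using e1 by (simp add: algebra_simps)
  finally have "real (card P) * (real (card D) * B) \<le> real (card P) * (real b * (\<Sum>d\<in>D. real (L d)))" .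
  then show ?thesis using cP unfolding D_def B_def by simp
qed

lemma finite_dem: "finite (distinct_demands N s)"
proof -
  have "finite ({..<s} \<rightarrow>\<^sub>E {..<N})" by (intro finite_PiE) auto
  then show ?thesis unfolding distinct_demands_def by simp
qed

lemma card_dem_pos: "s \<le> N \<Longrightarrow> card (distinct_demands N s) > 0"
  using d0_in[of 0 1 s N] finite_dem[of N s] by (metis card_gt_0_iff empty_iff mult_1 zero_less_one)

lemma ach_bound:
  assumes ach: "achievable_exp_rate M N s R" and b1: "b \<ge> 1" and bs: "b*s \<le> N" and M0: "M \<ge> 0"
  shows "real s - real s * M / real b \<le> R"
proof -
  define eps where "eps = 1 / (2 * real b)"
  have eps0: "eps > 0" using b1 unfolding eps_def by simp
  have epsb: "eps * (2 * real b) \<le> 1" using b1 unfolding eps_def by simp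
  obtain F0 where F0: "\<forall>F\<ge>F0. good_scheme M N s F R eps"
    using ach eps0 unfolding achievable_exp_rate_def by blast
  have sN: "s \<le> N"
  proof -
    have "1*s \<le> b*s" using b1 by (rule mult_right_mono) simp
    then show ?thesis using bs by linarith
  qed
  have cD: "real (card (distinct_demands N s)) > 0" using card_dem_pos[OF sN] by simp
  define c where "c = real b * real s - real s * M - real b * R"
  have key: "real F * c \<le> real s + 1" if F: "F \<ge> F0" for F
  proof -
    obtain phi :: "nat \<Rightarrow> (nat \<Rightarrow> bool list) \<Rightarrow> bool list"
      and psi :: "(nat \<Rightarrow> nat) \<Rightarrow> (nat \<Rightarrow> bool list) \<Rightarrow> bool list"
      and mu :: "(nat \<Rightarrow> nat) \<Rightarrow> nat \<Rightarrow> bool list \<Rightarrow> bool list \<Rightarrow> bool list"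
      and L :: "(nat \<Rightarrow> nat) \<Rightarrow> nat" where
      cache: "\<forall>k<s. \<forall>W\<in>file_libs N F. real (length (phi k W)) \<le> M * real F" and
      len: "\<forall>d\<in>distinct_demands N s. \<forall>W\<in>file_libs N F. length (psi d W) = L d" and
      err: "\<forall>d\<in>distinct_demands N s.
           real (card {W \<in> file_libs N F. \<exists>k<s. mu d k (psi d W) (phi k W) \<noteq> W (d k)})
             \<le> eps * real (card (file_libs N F))" and
      sm: "(\<Sum>d\<in>distinct_demands N s. real (L d)) \<le> R * real F * real (card (distinct_demands N s))"
      using F0 F unfolding good_scheme_def by blast
    have "real (card (distinct_demands N s)) * (real (b*s*F) - real s*(M*real F+1) - 1)
          \<le> real b * (\<Sum>d\<in>distinct_demands N s. real (L d))"
      by (rule avg[OF cache len err epsb bs M0 b1])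
    also have "\<dots> \<le> real b * (R * real F * real (card (distinct_demands N s)))"
      using sm by (intro mult_left_mono) auto
    finally have "real (card (distinct_demands N s)) * (real (b*s*F) - real s*(M*real F+1) - 1)
          \<le> real (card (distinct_demands N s)) * (real b * R * real F)" by (simp add: algebra_simps)
    then have "real (b*s*F) - real s*(M*real F+1) - 1 \<le> real b * R * real F"
      using cD by simp
    then show ?thesis unfolding c_def by (simp add: algebra_simps)
  qed
  have "c \<le> 0"
  proof (rule ccontr)
    assume "\<not> c \<le> 0"
    then have c0: "c > 0" by simp
    define F where "F = max F0 (nat \<lceil>(real s + 2) / c\<rceil>)"
    have "(real s + 2) / c \<le> real F" unfolding F_def by linarith
    then have "real s + 2 \<le> real F * c" using c0 by (simp add: field_simps)
    moreover have "real F * c \<le> real s + 1" using key[of F] unfolding F_def by simp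
    ultimately show False by simp
  qed
  then have "real b * real s - real s * M \<le> real b * R" unfolding c_def by simp
  then have "(real b * real s - real s * M) / real b \<le> R" using b1 by (simp add: field_simps)
  moreover have "(real b * real s - real s * M) / real b = real s - real s * M / real b"
    using b1 by (simp add: field_simps)
  ultimately show ?thesis by simp
qed

lemma ach_nonneg:
  assumes ach: "achievable_exp_rate M N s R" and sN: "s \<le> N"
  shows "0 \<le> R"
proof -
  obtain F0 where F0: "\<forall>F\<ge>F0. good_scheme M N s F R 1"
    using ach unfolding achievable_exp_rate_def by (meson zero_less_one)
  define F where "F = max F0 1"
  obtain L :: "(nat \<Rightarrow> nat) \<Rightarrow> nat" where
      sm: "(\<Sum>d\<in>distinct_demands N s. real (L d)) \<le> R * real F * real (card (distinct_demands N s))"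
  proof -
    have "good_scheme M N s F R 1" using F0 unfolding F_def by simp
    then show ?thesis using that unfolding good_scheme_def by blast
  qed
  have "0 \<le> (\<Sum>d\<in>distinct_demands N s. real (L d))" by (intro sum_nonneg) simp
  then have "0 \<le> R * (real F * real (card (distinct_demands N s)))" using sm by (simp add: mult.assoc)
  moreover have "real F * real (card (distinct_demands N s)) > 0"
    using card_dem_pos[OF sN] unfolding F_def by simp
  ultimately show ?thesis by (simp add: zero_le_mult_iff)
qed

lemma ach_exists:
  assumes sN: "s \<le> N" and M0: "M \<ge> 0"
  shows "achievable_exp_rate M N s (real s)"
  unfolding achievable_exp_rate_def
proof (intro allI impI exI)
  fix eps :: real and F :: nat assume eps: "eps > 0"
  define phi :: "nat \<Rightarrow> (nat \<Rightarrow> bool list) \<Rightarrow> bool list" where "phi k W = []" for k W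
  define psi :: "(nat \<Rightarrow> nat) \<Rightarrow> (nat \<Rightarrow> bool list) \<Rightarrow> bool list"
    where "psi d W = concat (map (\<lambda>k. W (d k)) [0..<s])" for d W
  define mu :: "(nat \<Rightarrow> nat) \<Rightarrow> nat \<Rightarrow> bool list \<Rightarrow> bool list \<Rightarrow> bool list"
    where "mu d k m c = take F (drop (k*F) m)" for d k m c
  define L :: "(nat \<Rightarrow> nat) \<Rightarrow> nat" where "L d = s * F" for d
  have lenW: "length (W (d k)) = F" if "W \<in> file_libs N F" "d \<in> distinct_demands N s" "k < s" for W d k
    using that unfolding file_libs_def distinct_demands_def by (auto simp: PiE_iff)
  have "(\<forall>k<s. \<forall>W\<in>file_libs N F. real (length (phi k W)) \<le> M * real F)"
    unfolding phi_def using M0 by simp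
  moreover have "\<forall>d\<in>distinct_demands N s. \<forall>W\<in>file_libs N F. length (psi d W) = L d"
  proof (intro ballI)
    fix d W assume d: "d \<in> distinct_demands N s" and W: "W \<in> file_libs N F"
    have "length (psi d W) = (\<Sum>k\<leftarrow>[0..<s]. length (W (d k)))"
      unfolding psi_def by (simp add: length_concat comp_def)
    also have "\<dots> = (\<Sum>k\<leftarrow>[0..<s]. F)"
      by (rule arg_cong[where f=sum_list], rule map_cong[OF refl]) (use lenW[OF W d] in simp)
    also have "\<dots> = L d" unfolding L_def by (simp add: sum_list_triv)
    finally show "length (psi d W) = L d" .
  qed
  moreover have "\<forall>d\<in>distinct_demands N s.
           real (card {W \<in> file_libs N F. \<exists>k<s. mu d k (psi d W) (phi k W) \<noteq> W (d k)})
             \<le> eps * real (card (file_libs N F))"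
  proof (intro ballI)
    fix d assume d: "d \<in> distinct_demands N s"
    have e: "{W \<in> file_libs N F. \<exists>k<s. mu d k (psi d W) (phi k W) \<noteq> W (d k)} = {}"
    proof -
      have "mu d k (psi d W) (phi k W) = W (d k)" if W: "W \<in> file_libs N F" and k: "k < s" for W k
      proof -
        have "mu d k (psi d W) (phi k W) = map (\<lambda>k. W (d k)) [0..<s] ! k"
          unfolding mu_def psi_def
          by (rule concat_slice) (use lenW[OF W d] k in auto)
        then show ?thesis using k by simp
      qed
      then show ?thesis by auto
    qed
    then show "real (card {W \<in> file_libs N F. \<exists>k<s. mu d k (psi d W) (phi k W) \<noteq> W (d k)})
             \<le> eps * real (card (file_libs N F))" unfolding e using eps by simp
  qed
  moreover have "(\<Sum>d\<in>distinct_demands N s. real (L d))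
           \<le> real s * real F * real (card (distinct_demands N s))"
    unfolding L_def by simp
  ultimately show "good_scheme M N s F (real s) eps"
    unfolding good_scheme_def by blast
qed

lemma Rbar_ge:
  assumes b1: "b \<ge> 1" and bs: "b*s \<le> N" and M0: "M \<ge> 0"
  shows "real s - real s * M / real b \<le> Rbar M N s" and "0 \<le> Rbar M N s"
proof -
  have sN: "s \<le> N"
  proof -
    have "1*s \<le> b*s" using b1 by (rule mult_right_mono) simp
    then show ?thesis using bs by linarith
  qed
  have ne: "{R. achievable_exp_rate M N s R} \<noteq> {}" using ach_exists[OF sN M0] by blast
  show "real s - real s * M / real b \<le> Rbar M N s"
    unfolding Rbar_def by (rule cInf_greatest[OF ne]) (use ach_bound[OF _ b1 bs M0] in simp)
  show "0 \<le> Rbar M N s"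
    unfolding Rbar_def by (rule cInf_greatest[OF ne]) (use ach_nonneg[OF _ sN] in simp)
qed

lemma Rfun_le:
  assumes M: "0 < M" "M \<le> real N" and N: "N > 0"
  shows "Rfun M N K \<le> (1 - M / real N) * min (min (real N / M) (real K)) (real N)"
proof -
  define q where "q = 1 - M / real N"
  have q0: "0 \<le> q" "q \<le> 1" using M N unfolding q_def by (auto simp: field_simps)
  define A where "A = real N / M * (1 - q ^ K)"
  have R: "Rfun M N K = q * min A (real N)"
    using M unfolding Rfun_def A_def q_def by auto
  have "1 - q ^ K \<le> 1" using q0 by simp
  then have "A \<le> real N / M * 1" unfolding A_def using M N by (intro mult_left_mono) auto
  then have A1: "A \<le> real N / M" by simp
  have "1 + real K * (- (M / real N)) \<le> (1 + - (M / real N)) ^ K"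
    by (rule Bernoulli_inequality) (use M N in \<open>simp add: field_simps\<close>)
  then have "1 - q ^ K \<le> real K * (M / real N)" unfolding q_def by simp
  then have "A \<le> real N / M * (real K * (M / real N))" unfolding A_def using M N
    by (intro mult_left_mono) auto
  also have "\<dots> = real K" using M N by (simp add: field_simps)
  finally have A2: "A \<le> real K" .
  have "min A (real N) \<le> min (min (real N / M) (real K)) (real N)" using A1 A2 by linarith
  then show ?thesis unfolding R q_def[symmetric] using q0 by (intro mult_left_mono) auto
qed

theorem lemma3:
  fixes M :: real and N K :: nat
  assumes "M \<ge> 0" and "N > 0" and "K > 0"
  shows "Max ((\<lambda>s. Rbar M N s) ` {1..nat \<lceil>real (min N K) / 4\<rceil>}) \<ge> Rfun M N K / 48"
proof -
  define m where "m = min N K"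
  define S where "S = nat \<lceil>real m / 4\<rceil>"
  have m1: "m \<ge> 1" "m \<le> N" "m \<le> K" using assms unfolding m_def by auto
  have S1: "S \<ge> 1" unfolding S_def using m1 by linarith
  have Sm: "S \<le> m" unfolding S_def using m1 by linarith
  have S4: "real m / 4 \<le> real S" unfolding S_def by linarith
  have fin: "finite ((\<lambda>s. Rbar M N s) ` {1..S})" by simp
  have ex: "\<exists>s\<in>{1..S}. Rfun M N K / 48 \<le> Rbar M N s"
  proof (cases "M = 0")
    case True
    have "Rfun M N K = real m" unfolding Rfun_def m_def using True by simp
    moreover have "real S - real S * M / real 1 \<le> Rbar M N S"
      by (rule Rbar_ge(1)) (use Sm m1 assms in auto)
    ultimately have "Rfun M N K / 48 \<le> Rbar M N S" using True S4 m1 by simp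
    then show ?thesis using S1 by auto
  next
    case Mne: False
    then have M0: "M > 0" using assms by simp
    show ?thesis
    proof (cases "M > real N")
      case True
      then have "Rfun M N K = 0" unfolding Rfun_def using M0 by simp
      moreover have "0 \<le> Rbar M N 1" by (rule Rbar_ge(2)[of 1]) (use assms in auto)
      ultimately show ?thesis using S1 by auto
    next
      case False
      then have MN: "M \<le> real N" by simp
      define t where "t = min (min (real N / M) (real K)) (real N)"
      have Rt: "Rfun M N K \<le> (1 - M / real N) * t" unfolding t_def
        by (rule Rfun_le[OF M0 MN assms(2)])
      have qq: "0 \<le> 1 - M / real N" "1 - M / real N \<le> 1" using M0 MN assms by (auto simp: field_simps)
      have t0: "t \<ge> 0" unfolding t_def using M0 by simp
      show ?thesis
      proof (cases "t < 48")
        case True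
        have "real 1 - real 1 * M / real N \<le> Rbar M N 1" by (rule Rbar_ge(1)) (use assms in auto)
        then have "1 - M / real N \<le> Rbar M N 1" by simp
        moreover have "Rfun M N K / 48 \<le> 1 - M / real N"
        proof -
          have "(1 - M / real N) * t \<le> (1 - M / real N) * 48" using True qq by (intro mult_left_mono) auto
          then show ?thesis using Rt by simp
        qed
        ultimately have "Rfun M N K / 48 \<le> Rbar M N 1" by linarith
        then show ?thesis using S1 by (intro bexI[of _ 1]) auto
      next
        case False
        then have t48: "t \<ge> 48" by simp
        define s where "s = nat \<lfloor>t / 4\<rfloor>"
        have s_le: "real s \<le> t / 4" unfolding s_def using t0 by linarith
        have s_gt: "t / 4 - 1 < real s" unfolding s_def using t0 by linarith
        have s1: "s \<ge> 1" using s_gt t48 by linarith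
        have tm: "t \<le> real m" unfolding t_def m_def by auto
        have sS: "s \<le> S" using s_le tm S4 by linarith
        have tNM: "t \<le> real N / M" "t \<le> real N" unfolding t_def by auto
        have sN4: "4 * real s \<le> real N" using s_le tNM by linarith
        have sNM: "4 * M * real s \<le> real N"
        proof -
          have "4 * real s \<le> real N / M" using s_le tNM by linarith
          then show ?thesis using M0 by (simp add: field_simps)
        qed
        define b where "b = N div s"
        have bs: "b * s \<le> N" unfolding b_def by simp
        have bgt: "real N < (real b + 1) * real s"
        proof -
          have m: "N mod s < s" using s1 by simp
          have "N = N div s * s + N mod s" by simp
          then have "N < N div s * s + s" using m by linarith
          then have "N < (N div s + 1) * s" by (simp add: algebra_simps)
          then have "real N < real ((b + 1) * s)" unfolding b_def by linarith
          then show ?thesis by (simp add: algebra_simps)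
        qed
        have b2M: "2 * M \<le> real b"
        proof -
          have sp: "real s > 0" using s1 by simp
          have "2 * M * real s + 2 * real s \<le> real N" using sN4 sNM by linarith
          also have "\<dots> < (real b + 1) * real s" by (rule bgt)
          finally have "(2 * M + 1) * real s < (real b) * real s" by (simp add: algebra_simps)
          then have "2 * M + 1 < real b" using sp by simp
          then show ?thesis by simp
        qed
        have b1: "b \<ge> 1" using b2M M0 by (cases b) auto
        have "real s - real s * M / real b \<le> Rbar M N s" by (rule Rbar_ge(1)[OF b1 bs assms(1)])
        moreover have "real s * M / real b \<le> real s / 2"
        proof -
          have "M / real b \<le> 1 / 2" using b2M b1 by (simp add: field_simps)
          then have "real s * (M / real b) \<le> real s * (1/2)" by (intro mult_left_mono) auto
          then show ?thesis by simp
        qed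
        moreover have "Rfun M N K / 48 \<le> real s / 2"
        proof -
          have "(1 - M / real N) * t \<le> t" using qq t0 by (simp add: mult_left_le_one_le)
          then show ?thesis using Rt s_gt t48 by linarith
        qed
        ultimately have "Rfun M N K / 48 \<le> Rbar M N s" by linarith
        then show ?thesis using s1 sS by auto
      qed
    qed
  qed
  then obtain s where s: "s \<in> {1..S}" "Rfun M N K / 48 \<le> Rbar M N s" by blast
  have "Rbar M N s \<le> Max ((\<lambda>s. Rbar M N s) ` {1..S})" using fin s(1) by (intro Max_ge) auto
  then show ?thesis using s(2) unfolding S_def m_def by linarith
qed

end
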